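(* For $n\ge0$ let $Q_n=\{-1,0,+1\}^n$, so that $Q_0$ consists of the empty tuple $()$. On the graded vector space $\bigoplus_{n\ge1}K[Q_{n-1}]$ define, for $a\in Q_{p-1}$ and $b\in Q_{q-1}$ (and extended bilinearly), the following elements of $Q_{p+q-1}$, where $(a,\varepsilon,b)$ denotes concatenation: $$a\dashv b=(a,-1,b),\qquad a\perp b=(a,0,b),\qquad a\vdash b=(a,+1,b).$$ Then $\bigl(\bigoplus_{n\ge1}K[Q_{n-1}];\dashv,\vdash,\perp\bigr)$ is a cubical trialgebra. Moreover, it is the free cubical trialgebra on the one generator $()\in Q_0$: for any cubical trialgebra $A$ and any $a\in A$ there is a unique morphism of cubical trialgebras sending $()$ to $a$.
   Context: A cubical trialgebra is a $K$-vector space $A$ with three bilinear operations $\dashv,\vdash,\perp$ satisfying the nine relations $(x\circ_1y)\circ_2z=x\circ_1(y\circ_2z)$ for all $x,y,z\in A$ and all $\circ_1,\circ_2\in\{\dashv,\vdash,\perp\}$. Morphisms are linear maps preserving the three operations. *)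

theory Defs
  imports Complex_Main "HOL-Library.Poly_Mapping"
begin

definition bilinear_op :: "('k::field \<Rightarrow> 'a::ab_group_add \<Rightarrow> 'a) \<Rightarrow> ('a \<Rightarrow> 'a \<Rightarrow> 'a) \<Rightarrow> bool" where
  "bilinear_op s m \<longleftrightarrow>
     (\<forall>x y z. m (x + y) z = m x z + m y z) \<and>
     (\<forall>x y z. m x (y + z) = m x y + m x z) \<and>
     (\<forall>c x y. m (s c x) y = s c (m x y)) \<and>
     (\<forall>c x y. m x (s c y) = s c (m x y))"

definition cubical_trialgebra ::
  "('k::field \<Rightarrow> 'a::ab_group_add \<Rightarrow> 'a) \<Rightarrow> ('a \<Rightarrow> 'a \<Rightarrow> 'a) \<Rightarrow> ('a \<Rightarrow> 'a \<Rightarrow> 'a) \<Rightarrow> ('a \<Rightarrow> 'a \<Rightarrow> 'a) \<Rightarrow> bool" where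
  "cubical_trialgebra s opl opr opp \<longleftrightarrow>
     Vector_Spaces.vector_space s \<and>
     (\<forall>m\<in>{opl, opr, opp}. bilinear_op s m) \<and>
     (\<forall>m1\<in>{opl, opr, opp}. \<forall>m2\<in>{opl, opr, opp}. \<forall>x y z. m2 (m1 x y) z = m1 x (m2 y z))"

definition trialgebra_morphism ::
  "('k::field \<Rightarrow> 'a::ab_group_add \<Rightarrow> 'a) \<Rightarrow> ('a \<Rightarrow> 'a \<Rightarrow> 'a) \<Rightarrow> ('a \<Rightarrow> 'a \<Rightarrow> 'a) \<Rightarrow> ('a \<Rightarrow> 'a \<Rightarrow> 'a) \<Rightarrow>
   ('k \<Rightarrow> 'b::ab_group_add \<Rightarrow> 'b) \<Rightarrow> ('b \<Rightarrow> 'b \<Rightarrow> 'b) \<Rightarrow> ('b \<Rightarrow> 'b \<Rightarrow> 'b) \<Rightarrow> ('b \<Rightarrow> 'b \<Rightarrow> 'b) \<Rightarrow>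
   ('a \<Rightarrow> 'b) \<Rightarrow> bool" where
  "trialgebra_morphism s1 l1 r1 p1 s2 l2 r2 p2 f \<longleftrightarrow>
     Vector_Spaces.linear s1 s2 f \<and>
     (\<forall>x y. f (l1 x y) = l2 (f x) (f y)) \<and>
     (\<forall>x y. f (r1 x y) = r2 (f x) (f y)) \<and>
     (\<forall>x y. f (p1 x y) = p2 (f x) (f y))"

text \<open>The cube coordinates {-1,0,+1}; Q_n = lists of length n.\<close>
datatype sgn3 = Neg | Nul | Pos

text \<open>The space (direct sum over n of K[Q_{n-1}]) = K-linear combinations of all
finite lists over sgn3, i.e. finitely supported functions.\<close>
type_synonym 'k cube_alg = "sgn3 list \<Rightarrow>\<^sub>0 'k"

definition cube_scale :: "'k::field \<Rightarrow> 'k cube_alg \<Rightarrow> 'k cube_alg" where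
  "cube_scale c f = Poly_Mapping.map (\<lambda>x. c * x) f"

definition cube_op :: "sgn3 \<Rightarrow> 'k::field cube_alg \<Rightarrow> 'k cube_alg \<Rightarrow> 'k cube_alg" where
  "cube_op e f g = (\<Sum>u\<in>Poly_Mapping.keys f. \<Sum>v\<in>Poly_Mapping.keys g. Poly_Mapping.single (u @ [e] @ v) (Poly_Mapping.lookup f u * Poly_Mapping.lookup g v))"

end

theory Submission
  imports Defs
begin

lemma lookup_cube_scale: "Poly_Mapping.lookup (cube_scale c f) k = c * Poly_Mapping.lookup f k"
  by (simp add: cube_scale_def Poly_Mapping.map.rep_eq when_def)

lemma vs_cube: "Vector_Spaces.vector_space (cube_scale :: 'k::field \<Rightarrow> 'k cube_alg \<Rightarrow> 'k cube_alg)"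
  by unfold_locales
     (auto intro!: poly_mapping_eqI simp: lookup_cube_scale lookup_add algebra_simps)

lemma keys_cube_scale: "Poly_Mapping.keys (cube_scale c f) \<subseteq> Poly_Mapping.keys f"
  by (auto simp: in_keys_iff lookup_cube_scale)

lemma cube_scale_single: "cube_scale c (Poly_Mapping.single k v) = Poly_Mapping.single k (c * v)"
  by (simp add: cube_scale_def)

lemma cube_scale_add: "cube_scale c (f + g) = cube_scale c f + cube_scale c g"
  by (auto intro!: poly_mapping_eqI simp: lookup_cube_scale lookup_add algebra_simps)

lemma cube_scale_zero: "cube_scale c 0 = 0"
  by (auto intro!: poly_mapping_eqI simp: lookup_cube_scale)

lemma cube_scale_sum: "cube_scale c (sum F S) = (\<Sum>x\<in>S. cube_scale c (F x))"
  by (induction S rule: infinite_finite_induct) (auto simp: cube_scale_add cube_scale_zero)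

lemma pm_repr: "f = (\<Sum>u\<in>Poly_Mapping.keys f. Poly_Mapping.single u (Poly_Mapping.lookup f u))"
proof (rule poly_mapping_eqI)
  fix k
  show "Poly_Mapping.lookup f k = Poly_Mapping.lookup (\<Sum>u\<in>Poly_Mapping.keys f. Poly_Mapping.single u (Poly_Mapping.lookup f u)) k"
    by (auto simp: lookup_sum lookup_single when_def in_keys_iff)
qed

lemma pm_induct:
  fixes f :: "'a \<Rightarrow>\<^sub>0 'b::comm_monoid_add"
  assumes "P 0" "\<And>k v. P (Poly_Mapping.single k v)" "\<And>f g. P f \<Longrightarrow> P g \<Longrightarrow> P (f + g)"
  shows "P f"
proof -
  have "P (\<Sum>u\<in>S. Poly_Mapping.single u (Poly_Mapping.lookup f u))" if "finite S" for S
    using that by (induction S rule: finite_induct) (auto intro: assms)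
  then show ?thesis by (metis pm_repr finite_keys)
qed

lemma cube_op_alt:
  assumes "finite S" "Poly_Mapping.keys f \<subseteq> S" "finite T" "Poly_Mapping.keys g \<subseteq> T"
  shows "cube_op e f g = (\<Sum>u\<in>S. \<Sum>v\<in>T. Poly_Mapping.single (u @ [e] @ v) (Poly_Mapping.lookup f u * Poly_Mapping.lookup g v))"
proof -
  have "cube_op e f g = (\<Sum>u\<in>Poly_Mapping.keys f. \<Sum>v\<in>T. Poly_Mapping.single (u @ [e] @ v) (Poly_Mapping.lookup f u * Poly_Mapping.lookup g v))"
    unfolding cube_op_def
    by (intro sum.cong refl sum.mono_neutral_left assms) (auto simp: in_keys_iff)
  also have "\<dots> = (\<Sum>u\<in>S. \<Sum>v\<in>T. Poly_Mapping.single (u @ [e] @ v) (Poly_Mapping.lookup f u * Poly_Mapping.lookup g v))"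
    by (intro sum.mono_neutral_left assms) (auto simp: in_keys_iff)
  finally show ?thesis .
qed

lemma cube_op_zero1: "cube_op e 0 g = 0" and cube_op_zero2: "cube_op e f 0 = 0"
  by (simp_all add: cube_op_def)

lemma cube_op_addl: "cube_op e (f + g) h = cube_op e f h + cube_op e g h"
proof -
  let ?S = "Poly_Mapping.keys f \<union> Poly_Mapping.keys g" and ?T = "Poly_Mapping.keys h"
  have "cube_op e (f + g) h = (\<Sum>u\<in>?S. \<Sum>v\<in>?T. Poly_Mapping.single (u @ [e] @ v) (Poly_Mapping.lookup (f+g) u * Poly_Mapping.lookup h v))"
    by (rule cube_op_alt) (auto simp: keys_add)
  also have "\<dots> = (\<Sum>u\<in>?S. \<Sum>v\<in>?T. Poly_Mapping.single (u @ [e] @ v) (Poly_Mapping.lookup f u * Poly_Mapping.lookup h v))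
     + (\<Sum>u\<in>?S. \<Sum>v\<in>?T. Poly_Mapping.single (u @ [e] @ v) (Poly_Mapping.lookup g u * Poly_Mapping.lookup h v))"
    by (simp add: lookup_add distrib_right single_add sum.distrib)
  also have "\<dots> = cube_op e f h + cube_op e g h"
    by (subst (1 2) cube_op_alt[where S="?S" and T="?T"]) auto
  finally show ?thesis .
qed

lemma cube_op_addr: "cube_op e h (f + g) = cube_op e h f + cube_op e h g"
proof -
  let ?S = "Poly_Mapping.keys f \<union> Poly_Mapping.keys g" and ?T = "Poly_Mapping.keys h"
  have "cube_op e h (f + g) = (\<Sum>u\<in>?T. \<Sum>v\<in>?S. Poly_Mapping.single (u @ [e] @ v) (Poly_Mapping.lookup h u * Poly_Mapping.lookup (f+g) v))"
    by (rule cube_op_alt) (auto simp: keys_add)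
  also have "\<dots> = (\<Sum>u\<in>?T. \<Sum>v\<in>?S. Poly_Mapping.single (u @ [e] @ v) (Poly_Mapping.lookup h u * Poly_Mapping.lookup f v))
     + (\<Sum>u\<in>?T. \<Sum>v\<in>?S. Poly_Mapping.single (u @ [e] @ v) (Poly_Mapping.lookup h u * Poly_Mapping.lookup g v))"
    by (simp add: lookup_add distrib_left single_add sum.distrib)
  also have "\<dots> = cube_op e h f + cube_op e h g"
    by (subst (1 2) cube_op_alt[where S="?T" and T="?S"]) auto
  finally show ?thesis .
qed

lemma cube_op_scalel: "cube_op e (cube_scale c f) g = cube_scale c (cube_op e f g)"
proof -
  have "cube_op e (cube_scale c f) g = (\<Sum>u\<in>Poly_Mapping.keys f. \<Sum>v\<in>Poly_Mapping.keys g. Poly_Mapping.single (u @ [e] @ v) (Poly_Mapping.lookup (cube_scale c f) u * Poly_Mapping.lookup g v))"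
    by (rule cube_op_alt) (auto simp: keys_cube_scale)
  then show ?thesis
    by (simp add: cube_op_def cube_scale_sum cube_scale_single lookup_cube_scale mult.assoc)
qed

lemma cube_op_scaler: "cube_op e f (cube_scale c g) = cube_scale c (cube_op e f g)"
proof -
  have "cube_op e f (cube_scale c g) = (\<Sum>u\<in>Poly_Mapping.keys f. \<Sum>v\<in>Poly_Mapping.keys g. Poly_Mapping.single (u @ [e] @ v) (Poly_Mapping.lookup f u * Poly_Mapping.lookup (cube_scale c g) v))"
    by (rule cube_op_alt) (auto simp: keys_cube_scale)
  then show ?thesis
    by (simp add: cube_op_def cube_scale_sum cube_scale_single lookup_cube_scale mult.left_commute)
qed

lemma cube_op_single: "cube_op e (Poly_Mapping.single u a) (Poly_Mapping.single v b) = Poly_Mapping.single (u @ [e] @ v) (a * b)"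
  by (subst cube_op_alt[where S="{u}" and T="{v}"]) auto

lemma cube_op_assoc: "cube_op e2 (cube_op e1 f g) h = cube_op e1 f (cube_op e2 g h)"
proof (induction f rule: pm_induct)
  case 1 then show ?case by (simp add: cube_op_zero1)
next
  case (3 f1 f2) then show ?case by (simp add: cube_op_addl)
next
  case (2 k1 v1)
  show ?case
  proof (induction g rule: pm_induct)
    case 1 then show ?case by (simp add: cube_op_zero1 cube_op_zero2)
  next
    case (3 f1 f2) then show ?case by (simp add: cube_op_addl cube_op_addr)
  next
    case (2 k2 v2)
    show ?case
    proof (induction h rule: pm_induct)
      case 1 then show ?case by (simp add: cube_op_zero1 cube_op_zero2)
    next
      case (3 f1 f2) then show ?case by (simp add: cube_op_addl cube_op_addr)
    next
      case (2 k3 v3)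
      then show ?case by (simp add: cube_op_single mult.assoc)
    qed
  qed
qed

lemma bilin_cube: "bilinear_op cube_scale (cube_op e)"
  unfolding bilinear_op_def
  by (simp add: cube_op_addl cube_op_addr cube_op_scalel cube_op_scaler)

lemma part1: "cubical_trialgebra (cube_scale :: 'k::field \<Rightarrow> 'k cube_alg \<Rightarrow> 'k cube_alg)
           (cube_op Neg) (cube_op Pos) (cube_op Nul)"
  unfolding cubical_trialgebra_def
  by (auto simp: vs_cube bilin_cube cube_op_assoc)


primrec evw :: "(sgn3 \<Rightarrow> 'a \<Rightarrow> 'a \<Rightarrow> 'a) \<Rightarrow> 'a \<Rightarrow> sgn3 list \<Rightarrow> 'a" where
  "evw op a [] = a"
| "evw op a (e # w) = op e a (evw op a w)"

lemma evw_app: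
  assumes "\<And>e1 e2 x y z. op e2 (op e1 x y) z = op e1 x (op e2 y z)"
  shows "evw op a (u @ [e] @ v) = op e (evw op a u) (evw op a v)"
  by (induction u) (simp_all add: assms)

definition cube_sel :: "('a \<Rightarrow> 'a \<Rightarrow> 'a) \<Rightarrow> ('a \<Rightarrow> 'a \<Rightarrow> 'a) \<Rightarrow> ('a \<Rightarrow> 'a \<Rightarrow> 'a) \<Rightarrow> sgn3 \<Rightarrow> 'a \<Rightarrow> 'a \<Rightarrow> 'a" where
  "cube_sel l r p e = (case e of Neg \<Rightarrow> l | Pos \<Rightarrow> r | Nul \<Rightarrow> p)"

definition extF :: "('k::field \<Rightarrow> 'a::ab_group_add \<Rightarrow> 'a) \<Rightarrow> (sgn3 \<Rightarrow> 'a \<Rightarrow> 'a \<Rightarrow> 'a) \<Rightarrow> 'a \<Rightarrow> 'k cube_alg \<Rightarrow> 'a" where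
  "extF s op a x = (\<Sum>w\<in>Poly_Mapping.keys x. s (Poly_Mapping.lookup x w) (evw op a w))"

lemma bilin_zero:
  assumes "bilinear_op s m"
  shows "m 0 y = 0" "m x 0 = 0"
proof -
  have "m (0 + 0) y = m 0 y + m 0 y" "m x (0 + 0) = m x 0 + m x 0"
    using assms unfolding bilinear_op_def by blast+
  then show "m 0 y = 0" "m x 0 = 0" by simp_all
qed

context
  fixes s :: "'k::field \<Rightarrow> 'a::ab_group_add \<Rightarrow> 'a" and op :: "sgn3 \<Rightarrow> 'a \<Rightarrow> 'a \<Rightarrow> 'a" and a :: 'a
  assumes vs: "Vector_Spaces.vector_space s"
    and bil: "\<And>e. bilinear_op s (op e)"
    and ass: "\<And>e1 e2 x y z. op e2 (op e1 x y) z = op e1 x (op e2 y z)"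
begin

interpretation V: vector_space s by (rule vs)

lemma extF_alt:
  assumes "finite S" "Poly_Mapping.keys x \<subseteq> S"
  shows "extF s op a x = (\<Sum>w\<in>S. s (Poly_Mapping.lookup x w) (evw op a w))"
  unfolding extF_def
  by (intro sum.mono_neutral_left assms) (auto simp: in_keys_iff)

lemma extF_add: "extF s op a (x + y) = extF s op a x + extF s op a y"
proof -
  let ?S = "Poly_Mapping.keys x \<union> Poly_Mapping.keys y"
  have "extF s op a (x + y) = (\<Sum>w\<in>?S. s (Poly_Mapping.lookup (x+y) w) (evw op a w))"
    by (rule extF_alt) (auto simp: keys_add)
  also have "\<dots> = (\<Sum>w\<in>?S. s (Poly_Mapping.lookup x w) (evw op a w)) + (\<Sum>w\<in>?S. s (Poly_Mapping.lookup y w) (evw op a w))"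
    by (simp add: lookup_add V.scale_left_distrib sum.distrib)
  also have "\<dots> = extF s op a x + extF s op a y"
    by (subst (1 2) extF_alt[where S="?S"]) auto
  finally show ?thesis .
qed

lemma extF_scale: "extF s op a (cube_scale c x) = s c (extF s op a x)"
proof -
  have "extF s op a (cube_scale c x) = (\<Sum>w\<in>Poly_Mapping.keys x. s (Poly_Mapping.lookup (cube_scale c x) w) (evw op a w))"
    by (rule extF_alt) (auto simp: keys_cube_scale)
  then show ?thesis
    by (simp add: extF_def V.scale_sum_right lookup_cube_scale)
qed

lemma extF_zero: "extF s op a 0 = 0"
  by (simp add: extF_def)

lemma extF_single: "extF s op a (Poly_Mapping.single w c) = s c (evw op a w)"
  by (subst extF_alt[where S="{w}"]) auto

lemma op_scale: "op e (s c x) (s d y) = s (c * d) (op e x y)"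
  using bil[of e] unfolding bilinear_op_def by (simp add: mult.commute)

lemma extF_op: "extF s op a (cube_op e x y) = op e (extF s op a x) (extF s op a y)"
proof (induction x rule: pm_induct)
  case 1 then show ?case by (simp add: cube_op_zero1 extF_zero bilin_zero[OF bil])
next
  case (3 f1 f2) then show ?case
    using bil[of e] unfolding bilinear_op_def by (simp add: cube_op_addl extF_add)
next
  case (2 k1 v1)
  show ?case
  proof (induction y rule: pm_induct)
    case 1 then show ?case by (simp add: cube_op_zero2 extF_zero bilin_zero[OF bil])
  next
    case (3 f1 f2) then show ?case
      using bil[of e] unfolding bilinear_op_def by (simp add: cube_op_addr extF_add)
  next
    case (2 k2 v2)
    then show ?case by (simp add: cube_op_single extF_single op_scale evw_app[OF ass, simplified])
  qed
qed

lemma extF_linear: "Vector_Spaces.linear cube_scale s (extF s op a)"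
  unfolding linear_iff_module_hom module_hom_iff module_iff_vector_space
  using vs vs_cube by (simp add: extF_add extF_scale)

lemma uniq:
  assumes lin: "Vector_Spaces.linear cube_scale s g"
    and hom: "\<And>e x y. g (cube_op e x y) = op e (g x) (g y)"
    and ga: "g (Poly_Mapping.single [] 1) = a"
  shows "g x = extF s op a x"
proof -
  have add: "g (x + y) = g x + g y" and sc: "g (cube_scale c x) = s c (g x)" for x y c
    using lin unfolding linear_iff_module_hom module_hom_iff by auto
  have z: "g 0 = 0" using add[of 0 0] by simp
  have sing: "g (Poly_Mapping.single w c) = s c (evw op a w)" for w c
  proof (induction w arbitrary: c)
    case Nil
    have "g (Poly_Mapping.single [] c) = g (cube_scale c (Poly_Mapping.single [] 1))"
      by (simp add: cube_scale_single)
    then show ?case by (simp add: sc ga)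
  next
    case (Cons e w)
    have "Poly_Mapping.single (e # w) c = cube_op e (Poly_Mapping.single [] 1) (Poly_Mapping.single w c)"
      by (simp add: cube_op_single)
    then have "g (Poly_Mapping.single (e # w) c) = op e a (s c (evw op a w))"
      by (simp add: hom ga Cons)
    also have "\<dots> = s c (op e a (evw op a w))"
      using bil[of e] unfolding bilinear_op_def by simp
    finally show ?case by simp
  qed
  show ?thesis
    by (induction x rule: pm_induct) (simp_all add: z extF_zero sing extF_single add extF_add)
qed

end

theorem proposition5p2:
  fixes K_witness :: "'k::field itself" and A_witness :: "'a::ab_group_add itself"
  shows "cubical_trialgebra (cube_scale :: 'k \<Rightarrow> 'k cube_alg \<Rightarrow> 'k cube_alg)
           (cube_op Neg) (cube_op Pos) (cube_op Nul) \<and>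
         (\<forall>(s :: 'k \<Rightarrow> 'a \<Rightarrow> 'a) opl opr opp (a :: 'a).
            cubical_trialgebra s opl opr opp \<longrightarrow>
            (\<exists>!f. trialgebra_morphism (cube_scale :: 'k \<Rightarrow> 'k cube_alg \<Rightarrow> 'k cube_alg)
                    (cube_op Neg) (cube_op Pos) (cube_op Nul) s opl opr opp f \<and>
                  f (Poly_Mapping.single [] 1) = a))"
proof (intro conjI allI impI)
  show "cubical_trialgebra (cube_scale :: 'k \<Rightarrow> 'k cube_alg \<Rightarrow> 'k cube_alg)
           (cube_op Neg) (cube_op Pos) (cube_op Nul)" by (rule part1)
next
  fix s :: "'k \<Rightarrow> 'a \<Rightarrow> 'a" and opl opr opp and a :: 'a
  assume ct: "cubical_trialgebra s opl opr opp"
  let ?op = "cube_sel opl opr opp"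
  have ct': "Vector_Spaces.vector_space s \<and> (\<forall>m\<in>{opl, opr, opp}. bilinear_op s m) \<and>
     (\<forall>m1\<in>{opl, opr, opp}. \<forall>m2\<in>{opl, opr, opp}. \<forall>x y z. m2 (m1 x y) z = m1 x (m2 y z))"
    using ct unfolding cubical_trialgebra_def .
  have vs: "Vector_Spaces.vector_space s" using ct' by (rule conjunct1)
  have bil: "bilinear_op s (?op e)" for e
    using ct'[THEN conjunct2, THEN conjunct1] by (cases e) (simp_all add: cube_sel_def)
  have ass: "?op e2 (?op e1 x y) z = ?op e1 x (?op e2 y z)" for e1 e2 x y z
    using ct'[THEN conjunct2, THEN conjunct2] by (cases e1; cases e2) (simp_all add: cube_sel_def)
  have hom_iff: "trialgebra_morphism cube_scale (cube_op Neg) (cube_op Pos) (cube_op Nul) s opl opr opp g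
     \<longleftrightarrow> Vector_Spaces.linear cube_scale s g \<and> (\<forall>e x y. g (cube_op e x y) = ?op e (g x) (g y))" for g
    unfolding trialgebra_morphism_def
  proof (rule iffI)
    assume h: "Vector_Spaces.linear cube_scale s g \<and>
      (\<forall>x y. g (cube_op Neg x y) = opl (g x) (g y)) \<and>
      (\<forall>x y. g (cube_op Pos x y) = opr (g x) (g y)) \<and> (\<forall>x y. g (cube_op Nul x y) = opp (g x) (g y))"
    have "g (cube_op e x y) = ?op e (g x) (g y)" for e x y
      using h by (cases e) (simp_all add: cube_sel_def)
    then show "Vector_Spaces.linear cube_scale s g \<and> (\<forall>e x y. g (cube_op e x y) = ?op e (g x) (g y))"
      using h by blast
  next
    assume h: "Vector_Spaces.linear cube_scale s g \<and> (\<forall>e x y. g (cube_op e x y) = ?op e (g x) (g y))"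
    have "g (cube_op Neg x y) = opl (g x) (g y)" "g (cube_op Pos x y) = opr (g x) (g y)"
       "g (cube_op Nul x y) = opp (g x) (g y)" for x y
      using h[THEN conjunct2, rule_format, of Neg x y] h[THEN conjunct2, rule_format, of Pos x y]
        h[THEN conjunct2, rule_format, of Nul x y] by (simp_all add: cube_sel_def)
    then show "Vector_Spaces.linear cube_scale s g \<and>
      (\<forall>x y. g (cube_op Neg x y) = opl (g x) (g y)) \<and>
      (\<forall>x y. g (cube_op Pos x y) = opr (g x) (g y)) \<and> (\<forall>x y. g (cube_op Nul x y) = opp (g x) (g y))"
      using h by blast
  qed
  show "\<exists>!f. trialgebra_morphism cube_scale (cube_op Neg) (cube_op Pos) (cube_op Nul) s opl opr opp f \<and>
                  f (Poly_Mapping.single [] 1) = a"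
  proof (rule ex1I[where a="extF s ?op a"])
    show "trialgebra_morphism cube_scale (cube_op Neg) (cube_op Pos) (cube_op Nul) s opl opr opp (extF s ?op a) \<and>
          extF s ?op a (Poly_Mapping.single [] 1) = a"
      unfolding hom_iff
      using extF_linear[of s "cube_sel opl opr opp", OF vs bil ass] extF_op[of s "cube_sel opl opr opp", OF vs bil ass] extF_single[of s "cube_sel opl opr opp", OF vs bil ass]
      by (simp add: vector_space.vector_space_assms(4)[OF vs])
  next
    fix g
    assume "trialgebra_morphism cube_scale (cube_op Neg) (cube_op Pos) (cube_op Nul) s opl opr opp g \<and>
            g (Poly_Mapping.single [] 1) = a"
    then show "g = extF s ?op a"
      unfolding hom_iff using uniq[of s "cube_sel opl opr opp", OF vs bil ass] by blast
  qed
qed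

end
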